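(* Let $G$ be a non-trivial graph with $m$ edges, maximum degree $\Delta$ and minimum degree $\delta$. Then $$ GA_1(\mathcal{L}(G)) \ge \min \Big\{ \, \frac{1}{4(\Delta-1)} \,,\, \frac{\sqrt{ (\Delta-1)(\delta-1)}}{(\Delta+\delta-2)^2} \, \Big\} \big(4m - 4M_1(G) +2 M_2(G) + F(G)\big) . $$
   Context: All graphs are finite and simple. A graph is non-trivial if each of its connected components has at least two edges. $d_u$ is the degree of $u$. $M_1(G)=\sum_{u\in V(G)}d_u^2$, $M_2(G)=\sum_{uv\in E(G)}d_ud_v$, $F(G)=\sum_{u\in V(G)}d_u^3$ (forgotten index), and $GA_1(G)=\sum_{uv\in E(G)}\frac{\sqrt{d_ud_v}}{\frac12(d_u+d_v)}$. The line graph $\mathcal{L}(G)$ has vertex set $E(G)$, two vertices being adjacent iff the corresponding edges share an end vertex in $G$. *)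

theory Defs
  imports Complex_Main
begin

definition simple_graph :: "'a set \<Rightarrow> 'a set set \<Rightarrow> bool" where
  "simple_graph V E \<longleftrightarrow> finite V \<and>
     (\<forall>e\<in>E. \<exists>u v. e = {u, v} \<and> u \<noteq> v \<and> u \<in> V \<and> v \<in> V)"

definition degree :: "'a set set \<Rightarrow> 'a \<Rightarrow> nat" where
  "degree E u = card {e\<in>E. u \<in> e}"

definition adj :: "'a set set \<Rightarrow> 'a \<Rightarrow> 'a \<Rightarrow> bool" where
  "adj E u v \<longleftrightarrow> {u, v} \<in> E"

definition component :: "'a set \<Rightarrow> 'a set set \<Rightarrow> 'a \<Rightarrow> 'a set" where
  "component V E u = {v\<in>V. (adj E)\<^sup>*\<^sup>* u v}"

definition nontrivial_graph :: "'a set \<Rightarrow> 'a set set \<Rightarrow> bool" where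
  "nontrivial_graph V E \<longleftrightarrow>
     (\<forall>u\<in>V. card {e\<in>E. e \<subseteq> component V E u} \<ge> 2)"

definition max_degree :: "'a set \<Rightarrow> 'a set set \<Rightarrow> nat" where
  "max_degree V E = Max (degree E ` V)"

definition min_degree :: "'a set \<Rightarrow> 'a set set \<Rightarrow> nat" where
  "min_degree V E = Min (degree E ` V)"

definition M1 :: "'a set \<Rightarrow> 'a set set \<Rightarrow> real" where
  "M1 V E = (\<Sum>u\<in>V. real (degree E u) ^ 2)"

definition M2 :: "'a set \<Rightarrow> 'a set set \<Rightarrow> real" where
  "M2 V E = (\<Sum>e\<in>E. \<Prod>u\<in>e. real (degree E u))"

definition forgotten :: "'a set \<Rightarrow> 'a set set \<Rightarrow> real" where
  "forgotten V E = (\<Sum>u\<in>V. real (degree E u) ^ 3)"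

definition GA1 :: "'a set \<Rightarrow> 'a set set \<Rightarrow> real" where
  "GA1 V E = (\<Sum>e\<in>E. sqrt (\<Prod>u\<in>e. real (degree E u)) / ((\<Sum>u\<in>e. real (degree E u)) / 2))"

definition line_graph_edges :: "'a set set \<Rightarrow> 'a set set set" where
  "line_graph_edges E = {{e, f} | e f. e \<in> E \<and> f \<in> E \<and> e \<noteq> f \<and> e \<inter> f \<noteq> {}}"

end

theory Submission
  imports Defs
begin

lemma chord4:
  fixes y s t :: real assumes "y \<ge> 0" "s \<ge> 0" "t \<ge> 0"
  shows "(s+t) * (y+s)^4 \<le> t * y^4 + s * (y+s+t)^4"
proof -
  define w where "w = y + s"
  have wy: "y \<le> w" "0 \<le> w" using assms by (auto simp: w_def)
  have eq: "t * y^4 + s * (y+s+t)^4 - (s+t) * (y+s)^4 =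
     s*t*((4*w^3+6*w^2*t+4*w*t^2+t^3) - (w^3+w^2*y+w*y^2+y^3))"
    unfolding w_def by (simp add: algebra_simps power_def)
  moreover have a1: "w^2*y \<le> w^3"
    using wy assms mult_left_mono[of y w "w^2"] by (simp add: power_def)
  moreover have a2: "w*y^2 \<le> w^3"
    using wy assms mult_left_mono[of "y^2" "w^2" w] power_mono[of y w 2] by (simp add: power_def)
  moreover have a3: "y^3 \<le> w^3" using wy assms power_mono by blast
  moreover have "0 \<le> w^2*t" "0 \<le> w*t^2" "0 \<le> t^3" using wy assms by auto
  ultimately have K: "0 \<le> (4*w^3+6*w^2*t+4*w*t^2+t^3) - (w^3+w^2*y+w*y^2+y^3)"
    by linarith
  have "0 \<le> s*t*((4*w^3+6*w^2*t+4*w*t^2+t^3) - (w^3+w^2*y+w*y^2+y^3))"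
    using K assms by simp
  then show ?thesis using eq by linarith
qed

lemma chord_gen:
  fixes x1 x x2 C al be :: real
  assumes "0 \<le> x1" "x1 \<le> x" "x \<le> x2" "0 \<le> C"
    "C * x1^4 \<le> al * x1 + be" "C * x2^4 \<le> al * x2 + be"
  shows "C * x^4 \<le> al * x + be"
proof -
  have c: "(x2 - x1) * x^4 \<le> (x2 - x) * x1^4 + (x - x1) * x2^4"
    using chord4[of x1 "x - x1" "x2 - x"] assms by simp
  have "(x2 - x1) * (C * x^4) \<le> C * ((x2 - x) * x1^4 + (x - x1) * x2^4)"
    using c assms(4) by (smt (verit) mult.left_commute mult_left_mono)
  also have "\<dots> = (x2 - x) * (C * x1^4) + (x - x1) * (C*x2^4)" by (simp add: algebra_simps)
  also have "\<dots> \<le> (x2 - x) * (al * x1 + be) + (x - x1) * (al * x2 + be)"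
    using assms by (intro add_mono mult_left_mono) auto
  also have "\<dots> = (x2 - x1) * (al * x + be)" by (simp add: algebra_simps)
  finally have *: "(x2 - x1) * (C * x^4) \<le> (x2 - x1) * (al * x + be)" .
  show ?thesis
  proof (cases "x1 = x2")
    case True then show ?thesis using assms by auto
  next
    case False then have "x2 - x1 > 0" using assms by auto
    then show ?thesis using * by simp
  qed
qed
lemma key_ineq:
  fixes p q a b c :: real
  assumes p: "0 < p" "p \<le> q" and a: "2*p \<le> a" "a \<le> 2*q" and b: "2*p \<le> b" "b \<le> 2*q"
    and c: "0 < c" "c \<le> 1 / (4*q)" "c \<le> sqrt (q*p) / (q+p)^2"
  shows "c * (a+b) \<le> sqrt (a*b) / ((a+b)/2)"
proof -
  define x where "x = a + b"
  have q0: "q > 0" using p by simp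
  have "c^2 \<le> (1/(4*q))^2" using c by (intro power_mono) auto
  then have c1: "c^2 * (16*q^2) \<le> 1" using q0 by (simp add: field_simps power2_eq_square)
  have "c^2 \<le> (sqrt (q*p) / (q+p)^2)^2" using c by (intro power_mono) auto
  also have "\<dots> = q*p / (q+p)^4" using p by (simp add: power_divide power2_eq_square[symmetric] power_mult[symmetric])
  finally have c2: "c^2 * (q+p)^4 \<le> q*p" using p by (simp add: field_simps)
  have c1p: "c^2 * (16*p^2) \<le> 1"
  proof -
    have "p^2 \<le> q^2" using p by (intro power_mono) auto
    then have "c^2 * (16*p^2) \<le> c^2 * (16*q^2)" by (intro mult_left_mono) auto
    then show ?thesis using c1 by linarith
  qed
  have E1: "c^2 * (4*p)^4 \<le> 8*p*(4*p) + (-16*p^2)"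
  proof -
    have "c^2 * (4*p)^4 = (c^2 * (16*p^2)) * (16*p^2)" by (simp add: power_def)
    also have "\<dots> \<le> 1 * (16*p^2)" using c1p by (intro mult_right_mono) auto
    finally show ?thesis by (simp add: power_def)
  qed
  have E4: "c^2 * (4*q)^4 \<le> 8*q*(4*q) + (-16*q^2)"
  proof -
    have "c^2 * (4*q)^4 = (c^2 * (16*q^2)) * (16*q^2)" by (simp add: power_def)
    also have "\<dots> \<le> 1 * (16*q^2)" using c1 by (intro mult_right_mono) auto
    finally show ?thesis by (simp add: power_def)
  qed
  have E2: "c^2 * (2*(p+q))^4 \<le> 8*p*(2*(p+q)) + (-16*p^2)"
  proof -
    have "c^2 * (2*(p+q))^4 = 16 * (c^2 * (q+p)^4)" by (simp add: algebra_simps power_def)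
    also have "\<dots> \<le> 16 * (q*p)" using c2 by simp
    finally show ?thesis by (simp add: algebra_simps power2_eq_square)
  qed
  have E3: "c^2 * (2*(p+q))^4 \<le> 8*q*(2*(p+q)) + (-16*q^2)"
    using E2 by (simp add: algebra_simps power2_eq_square)
  have L1: "8*p*x + (-16*p^2) \<le> 4*(a*b)"
  proof -
    have "0 \<le> (a - 2*p)*(b - 2*p)" using a b by simp
    then show ?thesis unfolding x_def by (simp add: algebra_simps power2_eq_square)
  qed
  have L2: "8*q*x + (-16*q^2) \<le> 4*(a*b)"
  proof -
    have "0 \<le> (2*q - a)*(2*q - b)" using a b by simp
    then show ?thesis unfolding x_def by (simp add: algebra_simps power2_eq_square)
  qed
  have main: "c^2 * x^4 \<le> 4*(a*b)"
  proof (cases "x \<le> 2*(p+q)")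
    case True
    have "c^2 * x^4 \<le> 8*p*x + (-16*p^2)"
      by (rule chord_gen[OF _ _ True _ E1 E2]) (use p a b x_def in auto)
    then show ?thesis using L1 by linarith
  next
    case False
    have "c^2 * x^4 \<le> 8*q*x + (-16*q^2)"
      by (rule chord_gen[OF _ _ _ _ E3 E4]) (use p a b x_def False in auto)
    then show ?thesis using L2 by linarith
  qed
  have xpos: "x > 0" using p a b x_def by simp
  have sq: "c^2 * x^4 = (c*x^2)^2" by (simp add: power_mult_distrib power_mult[symmetric])
  have "c * x^2 = sqrt (c^2 * x^4)" unfolding sq real_sqrt_abs using c by simp
  also have "\<dots> \<le> sqrt (4*(a*b))" using main by simp
  also have "\<dots> = 2 * sqrt (a*b)" by (simp add: real_sqrt_mult)
  finally have "c * x^2 \<le> 2 * sqrt (a*b)" .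
  then have "c * x \<le> 2 * sqrt (a*b) / x" using xpos by (simp add: field_simps power2_eq_square)
  then show ?thesis unfolding x_def by (simp add: mult.commute)
qed

lemma prod2: "a \<noteq> b \<Longrightarrow> (\<Prod>x\<in>{a,b}. g x) = (g a * g b :: real)" by simp
lemma sum2: "a \<noteq> b \<Longrightarrow> (\<Sum>x\<in>{a,b}. g x) = (g a + g b :: real)" by simp

lemma sg_edge:
  assumes "simple_graph V E" "e \<in> E"
  obtains u v where "e = {u,v}" "u \<noteq> v" "u \<in> V" "v \<in> V"
proof -
  have "\<forall>e\<in>E. \<exists>u v. e = {u, v} \<and> u \<noteq> v \<and> u \<in> V \<and> v \<in> V"
    using assms(1) unfolding simple_graph_def by (rule conjunct2)
  then have "\<exists>u v. e = {u, v} \<and> u \<noteq> v \<and> u \<in> V \<and> v \<in> V" using assms(2) by (rule bspec)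
  then show ?thesis using that by (elim exE conjE) 
qed

lemma sg_finE:
  assumes "simple_graph V E" shows "finite E"
proof -
  have "E \<subseteq> Pow V"
  proof
    fix e assume "e \<in> E"
    then obtain u v where "e = {u,v}" "u \<in> V" "v \<in> V" using sg_edge[OF assms] by metis
    then show "e \<in> Pow V" by simp
  qed
  moreover have "finite V" using assms unfolding simple_graph_def by (rule conjunct1)
  ultimately show ?thesis using finite_subset by blast
qed

lemma handshake:
  fixes g :: "'b \<Rightarrow> real"
  assumes "finite W" "finite H" "\<forall>h\<in>H. h \<subseteq> W"
  shows "(\<Sum>h\<in>H. \<Sum>x\<in>h. g x) = (\<Sum>x\<in>W. real (card {h\<in>H. x\<in>h}) * g x)"
proof -
  have "(\<Sum>h\<in>H. \<Sum>x\<in>h. g x) = (\<Sum>h\<in>H. \<Sum>x\<in>W. if x\<in>h then g x else 0)"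
  proof (rule sum.cong[OF refl])
    fix h assume "h \<in> H"
    then have "{x\<in>W. x\<in>h} = h" using assms by blast
    then show "(\<Sum>x\<in>h. g x) = (\<Sum>x\<in>W. if x\<in>h then g x else 0)"
      using sum.inter_filter[OF assms(1), of g "\<lambda>x. x\<in>h"] by simp
  qed
  also have "\<dots> = (\<Sum>x\<in>W. \<Sum>h\<in>H. if x\<in>h then g x else 0)" by (rule sum.swap)
  also have "\<dots> = (\<Sum>x\<in>W. real (card {h\<in>H. x\<in>h}) * g x)"
  proof (rule sum.cong[OF refl])
    fix x assume "x \<in> W"
    show "(\<Sum>h\<in>H. if x\<in>h then g x else 0) = real (card {h\<in>H. x\<in>h}) * g x"
      using sum.inter_filter[OF assms(2), of "\<lambda>_. g x" "\<lambda>h. x\<in>h"] by simp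
  qed
  finally show ?thesis .
qed

lemma degree_pos:
  assumes "simple_graph V E" "e \<in> E" "u \<in> e" shows "degree E u \<ge> 1"
proof -
  have "finite {f\<in>E. u\<in>f}" using sg_finE[OF assms(1)] by simp
  moreover have "e \<in> {f\<in>E. u\<in>f}" using assms by simp
  ultimately show ?thesis unfolding degree_def
    by (metis (no_types, lifting) One_nat_def Suc_leI card_gt_0_iff empty_iff)
qed

lemma line_degree:
  assumes sg: "simple_graph V E" and e: "e \<in> E" "e = {u,v}" "u \<noteq> v"
  shows "degree (line_graph_edges E) e = degree E u + degree E v - 2"
proof -
  define N where "N = {f\<in>E. f \<noteq> e \<and> f \<inter> e \<noteq> {}}"
  define A where "A = {f\<in>E. u\<in>f}"
  define B where "B = {f\<in>E. v\<in>f}"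
  have fin: "finite E" using sg_finE[OF sg] .
  have img: "{h\<in>line_graph_edges E. e\<in>h} = (\<lambda>f. {e,f}) ` N"
  proof
    show "{h\<in>line_graph_edges E. e\<in>h} \<subseteq> (\<lambda>f. {e,f}) ` N"
    proof
      fix h assume "h \<in> {h\<in>line_graph_edges E. e\<in>h}"
      then obtain e1 f1 where h: "h = {e1,f1}" "e1\<in>E" "f1\<in>E" "e1\<noteq>f1" "e1\<inter>f1\<noteq>{}" "e \<in> h"
        unfolding line_graph_edges_def by blast
      show "h \<in> (\<lambda>f. {e,f}) ` N"
      proof (cases "e = e1")
        case True
        then have "f1 \<in> N" using h unfolding N_def by blast
        then show ?thesis using h True by blast
      next
        case False
        then have "e = f1" using h by blast
        then have "e1 \<in> N" using h unfolding N_def by blast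
        moreover have "h = {e, e1}" using h \<open>e = f1\<close> by blast
        ultimately show ?thesis by blast
      qed
    qed
  next
    show "(\<lambda>f. {e,f}) ` N \<subseteq> {h\<in>line_graph_edges E. e\<in>h}"
      unfolding N_def line_graph_edges_def using e by blast
  qed
  have inj: "inj_on (\<lambda>f. {e,f}) N"
    unfolding inj_on_def N_def by (auto simp: doubleton_eq_iff)
  have NAB: "N = (A - {e}) \<union> (B - {e})"
    unfolding N_def A_def B_def using e by blast
  have disj: "(A - {e}) \<inter> (B - {e}) = {}"
  proof (rule ccontr)
    assume "(A - {e}) \<inter> (B - {e}) \<noteq> {}"
    then obtain f where f: "f \<in> E" "u \<in> f" "v \<in> f" "f \<noteq> e" unfolding A_def B_def by blast
    obtain x y where "f = {x,y}" "x \<noteq> y" using sg_edge[OF sg f(1)] by metis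
    then have "f = {u,v}" using f e by blast
    then show False using f e by blast
  qed
  have finA: "finite A" "finite B" using fin unfolding A_def B_def by auto
  have eA: "e \<in> A" "e \<in> B" using e unfolding A_def B_def by auto
  have "card N = card (A - {e}) + card (B - {e})"
    unfolding NAB using finA disj by (simp add: card_Un_disjoint)
  also have "\<dots> = (card A - 1) + (card B - 1)" using finA eA by simp
  finally have cN: "card N = (card A - 1) + (card B - 1)" .
  have "card A \<ge> 1" "card B \<ge> 1" using finA eA
    by (metis One_nat_def Suc_leI card_gt_0_iff empty_iff)+
  then show ?thesis unfolding degree_def img card_image[OF inj] cN A_def[symmetric] B_def[symmetric]
    by simp
qed


theorem proposition2p8:
  fixes V :: "'a set" and E :: "'a set set"
  assumes "simple_graph V E" and "nontrivial_graph V E"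
  shows "GA1 E (line_graph_edges E) \<ge>
    min (1 / (4 * (real (max_degree V E) - 1)))
        (sqrt ((real (max_degree V E) - 1) * (real (min_degree V E) - 1))
           / (real (max_degree V E) + real (min_degree V E) - 2) ^ 2)
    * (4 * real (card E) - 4 * M1 V E + 2 * M2 V E + forgotten V E)"
proof -
  note sg = assms(1)
  define D where "D = max_degree V E"
  define d where "d = min_degree V E"
  define LE where "LE = line_graph_edges E"
  define cc where "cc = min (1 / (4 * (real D - 1)))
        (sqrt ((real D - 1) * (real d - 1)) / (real D + real d - 2) ^ 2)"
  define Q where "Q = 4 * real (card E) - 4 * M1 V E + 2 * M2 V E + forgotten V E"
  have finV: "finite V" using sg unfolding simple_graph_def by blast
  have finE: "finite E" using sg_finE[OF sg] .
  have EV: "\<forall>e\<in>E. e \<subseteq> V"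
  proof
    fix e assume "e \<in> E"
    then obtain u v where "e = {u,v}" "u \<in> V" "v \<in> V" using sg_edge[OF sg] by metis
    then show "e \<subseteq> V" by simp
  qed
  have LEsub: "\<forall>h\<in>LE. h \<subseteq> E" unfolding LE_def line_graph_edges_def by auto
  have finLE: "finite LE"
  proof -
    have "LE \<subseteq> Pow E" using LEsub by blast
    then show ?thesis using finE finite_subset by blast
  qed
  have LEform: "\<exists>e f. h = {e,f} \<and> e \<in> E \<and> f \<in> E \<and> e \<noteq> f" if "h \<in> LE" for h
    using that unfolding LE_def line_graph_edges_def by blast
  have dHe: "real (degree LE e) = (\<Sum>x\<in>e. real (degree E x)) - 2" if eE: "e \<in> E" for e
  proof -
    obtain u v where uv: "e = {u,v}" "u \<noteq> v" "u \<in> V" "v \<in> V" using sg_edge[OF sg eE] by metis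
    have "degree E u \<ge> 1" "degree E v \<ge> 1" using degree_pos[OF sg eE] uv by auto
    then show ?thesis using line_degree[OF sg eE uv(1,2)] uv unfolding LE_def by simp
  qed
  have sqe: "(\<Sum>x\<in>e. real (degree E x))^2 = (\<Sum>x\<in>e. real (degree E x)^2) + 2 * (\<Prod>x\<in>e. real (degree E x))"
    if eE: "e \<in> E" for e
  proof -
    obtain u v where uv: "e = {u,v}" "u \<noteq> v" using sg_edge[OF sg eE] by metis
    then show ?thesis by (simp add: power2_eq_square algebra_simps)
  qed
  have HS: "(\<Sum>e\<in>E. \<Sum>x\<in>e. g x) = (\<Sum>x\<in>V. real (degree E x) * g x)" for g :: "'a \<Rightarrow> real"
    using handshake[OF finV finE EV, of g] unfolding degree_def by simp
  have Qeq: "Q = (\<Sum>e\<in>E. real (degree LE e)^2)"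
  proof -
    have "(\<Sum>e\<in>E. real (degree LE e)^2) = (\<Sum>e\<in>E. (\<Sum>x\<in>e. real (degree E x)^2) + 2 * (\<Prod>x\<in>e. real (degree E x)) - 4 * (\<Sum>x\<in>e. real (degree E x)) + 4)"
    proof (rule sum.cong[OF refl])
      fix e assume "e \<in> E"
      show "real (degree LE e)^2 = (\<Sum>x\<in>e. real (degree E x)^2) + 2 * (\<Prod>x\<in>e. real (degree E x)) - 4 * (\<Sum>x\<in>e. real (degree E x)) + 4"
      proof -
        have sq2: "(z - 2)^2 = z^2 - 4*z + 4" for z :: real by (simp add: power2_eq_square algebra_simps)
        show ?thesis unfolding dHe[OF \<open>e \<in> E\<close>] sq2 using sqe[OF \<open>e \<in> E\<close>] by linarith
      qed
    qed
    also have "\<dots> = (\<Sum>e\<in>E. \<Sum>x\<in>e. real (degree E x)^2) + 2 * M2 V E - 4 * (\<Sum>e\<in>E. \<Sum>x\<in>e. real (degree E x)) + 4 * real (card E)"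
      unfolding M2_def sum.distrib sum_subtractf sum_distrib_left[symmetric] by simp
    also have "\<dots> = Q"
    proof -
      have a: "(\<Sum>x\<in>V. real (degree E x) * real (degree E x)^2) = forgotten V E"
        unfolding forgotten_def by (intro sum.cong refl) (simp add: power2_eq_square power3_eq_cube)
      have b: "(\<Sum>x\<in>V. real (degree E x) * real (degree E x)) = M1 V E"
        unfolding M1_def by (intro sum.cong refl) (simp add: power2_eq_square)
      show ?thesis unfolding HS a b Q_def by linarith
    qed
    finally show ?thesis by simp
  qed
  have Q0: "Q \<ge> 0" unfolding Qeq by (intro sum_nonneg) auto
  have GAeq: "GA1 E LE = (\<Sum>h\<in>LE. sqrt (\<Prod>x\<in>h. real (degree LE x)) / ((\<Sum>x\<in>h. real (degree LE x)) / 2))"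
    unfolding GA1_def by simp
  have GA0: "GA1 E LE \<ge> 0" unfolding GAeq
    by (intro sum_nonneg divide_nonneg_nonneg) (auto intro: sum_nonneg prod_nonneg)
  have "cc * Q \<le> GA1 E LE"
  proof (cases "cc \<le> 0")
    case True
    then have "cc * Q \<le> 0" using Q0 by (simp add: mult_nonpos_nonneg)
    then show ?thesis using GA0 by linarith
  next
    case False
    then have cpos: "cc > 0" by simp
    define p where "p = real d - 1"
    define q where "q = real D - 1"
    have cq: "cc \<le> 1 / (4*q)" unfolding cc_def q_def by (rule min.cobounded1)
    have e1: "real D + real d - 2 = q + p" unfolding p_def q_def by simp
    have e2: "(real D - 1) * (real d - 1) = q * p" unfolding p_def q_def by simp
    have cpq: "cc \<le> sqrt (q*p) / (q+p)^2" unfolding cc_def e1 e2 by (rule min.cobounded2)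
    have "1 / (4*q) > 0" using cq cpos by linarith
    then have q0: "q > 0" by (simp add: zero_less_divide_iff)
    have "sqrt (q*p) / (q+p)^2 > 0" using cpq cpos by linarith
    then have "sqrt (q*p) > 0"
    proof (rule contrapos_pp)
      assume "\<not> sqrt (q*p) > 0"
      then show "\<not> sqrt (q*p) / (q+p)^2 > 0" using divide_nonpos_nonneg[of "sqrt (q*p)" "(q+p)^2"] by simp
    qed
    then have "q*p > 0" by simp
    then have p0: "p > 0" using q0 by (simp add: zero_less_mult_iff)
    have bnd: "2*p \<le> real (degree LE e) \<and> real (degree LE e) \<le> 2*q" if eE: "e \<in> E" for e
    proof -
      obtain u v where uv: "e = {u,v}" "u \<noteq> v" "u \<in> V" "v \<in> V" using sg_edge[OF sg eE] by metis
      have "degree E u \<le> D" "degree E v \<le> D" unfolding D_def max_degree_def using finV uv by auto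
      moreover have "d \<le> degree E u" "d \<le> degree E v" unfolding d_def min_degree_def using finV uv by auto
      ultimately show ?thesis using dHe[OF eE] uv unfolding p_def q_def by simp
    qed
    have "(\<Sum>h\<in>LE. cc * (\<Sum>x\<in>h. real (degree LE x))) \<le> GA1 E LE"
      unfolding GAeq
    proof (rule sum_mono)
      fix h assume "h \<in> LE"
      then obtain e f where h: "h = {e,f}" "e \<in> E" "f \<in> E" "e \<noteq> f" using LEform by metis
      have pq: "p \<le> q" using bnd[OF h(2)] by linarith
      have key: "cc * (real (degree LE e) + real (degree LE f)) \<le>
          sqrt (real (degree LE e) * real (degree LE f)) / ((real (degree LE e) + real (degree LE f)) / 2)"
        using bnd[OF h(2)] bnd[OF h(3)]
        by (intro key_ineq[OF p0 pq _ _ _ _ cpos cq cpq]) simp_all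
      show "cc * (\<Sum>x\<in>h. real (degree LE x)) \<le> sqrt (\<Prod>x\<in>h. real (degree LE x)) / ((\<Sum>x\<in>h. real (degree LE x)) / 2)"
      proof -
        have ef: "e \<notin> {f}" using h(4) by simp
        have hp: "(\<Prod>x\<in>h. real (degree LE x)) = real (degree LE e) * real (degree LE f)"
          unfolding h(1) by (rule prod2[OF h(4)])
        have hs: "(\<Sum>x\<in>h. real (degree LE x)) = real (degree LE e) + real (degree LE f)"
          unfolding h(1) by (rule sum2[OF h(4)])
        show ?thesis unfolding hp hs by (rule key)
      qed
    qed
    moreover have "(\<Sum>h\<in>LE. cc * (\<Sum>x\<in>h. real (degree LE x))) = cc * Q"
    proof -
      have "(\<Sum>h\<in>LE. \<Sum>x\<in>h. real (degree LE x)) = (\<Sum>e\<in>E. real (degree LE e) * real (degree LE e))"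
        using handshake[OF finE finLE LEsub, of "\<lambda>x. real (degree LE x)"] unfolding degree_def by simp
      then show ?thesis unfolding Qeq by (simp add: sum_distrib_left[symmetric] power2_eq_square)
    qed
    ultimately show ?thesis by simp
  qed
  then show ?thesis unfolding cc_def Q_def D_def d_def LE_def .
qed

end
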